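(* For every integer $k\geq 1$, the following identity of formal power series in $q$ holds: \[ \sum_{n\geq 0} b(n,k)\, q^n=\frac{1}{1-q}\left(\sum_{t\geq 1} q^{\binom{t}{2}k^2}\,\frac{1-q^{tk^2}}{1-q^{tk}}-1\right). \]
   Context: A partition $\lambda=(\lambda_1\geq\lambda_2\geq\cdots\geq\lambda_r>0)$ of $n$ is identified with its Young diagram. For a cell $u$ of the Young diagram, the hook length $h_u(\lambda)$ is the number of cells $v$ of the diagram with $v=u$, or $v$ below $u$ in the same column, or $v$ to the right of $u$ in the same row. For $k\geq 1$, $\alpha_k(\lambda)$ denotes the number of cells of the Young diagram of $\lambda$ whose hook length equals $k$ (the number of $k$-hooks of $\lambda$). Let $P(n)$ be the set of partitions of $n$ (with $P(0)$ containing only the empty partition), and $b(n,k)=\max\{\alpha_k(\lambda)\colon \lambda\in P(n)\}$. *)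

theory Defs
  imports "HOL-Computational_Algebra.Formal_Power_Series"
begin

definition is_partition :: "nat list \<Rightarrow> nat \<Rightarrow> bool" where
  "is_partition lam n \<longleftrightarrow> sorted_wrt (\<ge>) lam \<and> (\<forall>x\<in>set lam. x > 0) \<and> sum_list lam = n"

definition partitions :: "nat \<Rightarrow> nat list set" where
  "partitions n = {lam. is_partition lam n}"

text \<open>Young diagram: cell (i,j) = row i, column j (0-based), English convention.\<close>
definition young_diagram :: "nat list \<Rightarrow> (nat \<times> nat) set" where
  "young_diagram lam = {(i, j). i < length lam \<and> j < lam ! i}"

definition hook_length :: "nat list \<Rightarrow> nat \<times> nat \<Rightarrow> nat" where
  "hook_length lam u = card {v \<in> young_diagram lam.
      v = u \<or> (snd v = snd u \<and> fst v > fst u) \<or> (fst v = fst u \<and> snd v > snd u)}"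

definition num_hooks :: "nat \<Rightarrow> nat list \<Rightarrow> nat" where
  "num_hooks k lam = card {u \<in> young_diagram lam. hook_length lam u = k}"

definition b :: "nat \<Rightarrow> nat \<Rightarrow> nat" where
  "b n k = Max (num_hooks k ` partitions n)"

end

theory Submission
  imports Defs
begin

unbundle fps_syntax


definition tri :: "nat \<Rightarrow> nat" where "tri n = (\<Sum>i<n. i)"

lemma tri_0[simp]: "tri 0 = 0" by (simp add: tri_def)
lemma tri_Suc[simp]: "tri (Suc n) = tri n + n" by (simp add: tri_def)

lemma tri_add: "tri (x + y) = tri x + x * y + tri y"
  by (induction y) (auto simp: algebra_simps)

lemma tri_mult: "tri (k * m) = k * k * tri m + m * tri k"
proof (induction m)
  case 0 then show ?case by simp
next
  case (Suc m)
  have "tri (k * Suc m) = tri (k*m + k)" by (simp add: algebra_simps)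
  also have "\<dots> = tri (k*m) + k*m*k + tri k" by (rule tri_add)
  finally show ?case using Suc by (simp add: algebra_simps)
qed

lemma tri_choose: "tri t = t choose 2"
proof (induction t)
  case 0 then show ?case by simp
next
  case (Suc t)
  have "(Suc t) choose 2 = (t choose 1) + (t choose 2)"
    by (metis Suc_1 choose_reduce_nat nat.distinct(1) diff_Suc_1 zero_less_Suc)
  then show ?case using Suc by simp
qed

lemma tri_twice: "2 * tri x + x = x * x"
  by (induction x) (auto simp: algebra_simps)

lemma sum_split_add: "(\<Sum>i<(x::nat)+y. f i) = (\<Sum>i<x. f i) + (\<Sum>i<y. f (x + i))"
  by (induction y) (auto simp: algebra_simps)

definition H :: "nat \<Rightarrow> nat \<Rightarrow> nat" where "H k c = (\<Sum>i<c. i div k + 1)"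

definition F :: "nat \<Rightarrow> nat \<Rightarrow> nat" where "F k c = k * H k c"

lemma H_mult: assumes "k \<ge> 1" shows "H k (q * k) = k * tri (q + 1)"
proof (induction q)
  case 0 then show ?case by (simp add: H_def)
next
  case (Suc q)
  have "H k (Suc q * k) = H k (q*k) + (\<Sum>i<k. (q*k + i) div k + 1)"
    unfolding H_def using sum_split_add[of "\<lambda>i. i div k + 1" "q*k" k] by (simp add: add.commute)
  also have "(\<Sum>i<k. (q*k + i) div k + 1) = (\<Sum>i<k. q + 1)"
    using assms by (intro sum.cong) auto
  finally show ?case using Suc by (simp add: algebra_simps)
qed

lemma H_closed: assumes "k \<ge> 1" "j \<le> k" shows "H k (q * k + j) = k * tri (q + 1) + j * (q + 1)"
proof -
  have "H k (q * k + j) = H k (q*k) + (\<Sum>i<j. (q*k + i) div k + 1)"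
    unfolding H_def by (simp add: sum_split_add)
  also have "(\<Sum>i<j. (q*k + i) div k + 1) = (\<Sum>i<j. q + 1)"
    using assms by (intro sum.cong) auto
  finally show ?thesis using H_mult[OF assms(1)] by simp
qed

lemma H_mono: "c \<le> c' \<Longrightarrow> H k c \<le> H k c'"
  unfolding H_def by (rule sum_mono2) auto

lemma F_mono: "c \<le> c' \<Longrightarrow> F k c \<le> F k c'"
  unfolding F_def using H_mono by simp

lemma H_ge: "c \<le> H k c"
proof -
  have "(\<Sum>i<c. (1::nat)) \<le> H k c" unfolding H_def by (rule sum_mono) auto
  then show ?thesis by simp
qed

lemma F_ge: "k \<ge> 1 \<Longrightarrow> c \<le> F k c"
  unfolding F_def using H_ge[of c k] by (metis le_trans mult_le_mono1 mult_1)

lemma F_0[simp]: "F k 0 = 0" by (simp add: F_def H_def)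


lemma tri_le_sq: "tri d \<le> d * d"
  using tri_twice[of d] by linarith

lemma tangent: "tri (q+1) + (q+1) * x \<le> tri (x+1) + (q+1) * q"
proof (cases "x \<le> q")
  case True
  then obtain d where q: "q = x + d" using le_Suc_ex by blast
  have "tri (q+1) = tri (x+1) + (x+1)*d + tri d" unfolding q using tri_add[of "x+1" d] by (simp add: algebra_simps)
  then show ?thesis unfolding q using tri_le_sq[of d] by (simp add: algebra_simps)
next
  case False
  then obtain d where x: "x = q + 1 + d" using le_Suc_ex[of "q+1" x] by auto
  have "tri (x+1) = tri (q+1) + (q+1)*(d+1) + tri (d+1)" unfolding x using tri_add[of "q+1" "d+1"] by (simp add: algebra_simps)
  then show ?thesis unfolding x by (simp add: algebra_simps)
qed

lemma convex_bound:
  assumes k: "k \<ge> 1"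
  shows "H k (\<Sum>r<k. c r) \<le> (\<Sum>r<k. tri (c r + 1))"
proof -
  define s where "s = (\<Sum>r<k. c r)"
  define q where "q = s div k"
  define j where "j = s mod k"
  have sq: "s = q * k + j" unfolding q_def j_def by simp
  have jk: "j \<le> k" unfolding j_def using k by (simp add: less_imp_le)
  have Hs: "H k s = k * tri (q+1) + j * (q+1)" using H_closed[OF k jk] sq by simp
  have "(\<Sum>r<k. tri (q+1) + (q+1) * c r) \<le> (\<Sum>r<k. tri (c r + 1) + (q+1) * q)"
    by (rule sum_mono) (rule tangent)
  then have "k * tri (q+1) + (q+1) * s \<le> (\<Sum>r<k. tri (c r + 1)) + k * ((q+1) * q)"
    by (simp add: sum.distrib sum_distrib_left s_def)
  then have "k * tri (q+1) + (q+1) * j + k * ((q+1) * q) \<le> (\<Sum>r<k. tri (c r + 1)) + k * ((q+1) * q)"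
    unfolding sq by (simp add: algebra_simps)
  then show ?thesis using Hs s_def by (simp add: algebra_simps)
qed



definition cnt :: "nat \<Rightarrow> nat set \<Rightarrow> nat" where
  "cnt k B = card {x\<in>B. k \<le> x \<and> x - k \<notin> B}"

definition U :: "nat \<Rightarrow> (nat \<Rightarrow> nat set) \<Rightarrow> nat set" where
  "U k S = (\<lambda>(r,q). q*k + r) ` (SIGMA r:{..<k}. S r)"

lemma U_mem: assumes "k \<ge> 1" shows "x \<in> U k S \<longleftrightarrow> x div k \<in> S (x mod k)"
proof
  assume "x \<in> U k S"
  then obtain r q where "r < k" "q \<in> S r" "x = q*k + r" unfolding U_def by auto
  then show "x div k \<in> S (x mod k)" by simp
next
  assume "x div k \<in> S (x mod k)"
  moreover have "x mod k < k" using assms by simp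
  moreover have "x = (x div k) * k + x mod k" by simp
  ultimately show "x \<in> U k S" unfolding U_def by (auto intro!: image_eqI[of _ _ "(x mod k, x div k)"])
qed

lemma inj_phi: assumes "(k::nat) \<ge> 1" shows "inj_on (\<lambda>(r,q). q*k + r) (SIGMA r:{..<k}. S r)"
proof (rule inj_onI, clarsimp)
  fix r q r' q' assume "r < k" "r' < k" "q * k + r = q' * k + r'"
  then have "(q * k + r) div k = (q' * k + r') div k" "(q * k + r) mod k = (q' * k + r') mod k" by simp_all
  with \<open>r < k\<close> \<open>r' < k\<close> show "r = r' \<and> q = q'" by simp
qed

lemma card_U: assumes "k \<ge> 1" "\<And>r. r < k \<Longrightarrow> finite (S r)"
  shows "card (U k S) = (\<Sum>r<k. card (S r))"
  unfolding U_def using assms by (simp add: card_image[OF inj_phi[OF assms(1)]] card_SigmaI)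

lemma sum_U: assumes "k \<ge> 1" "\<And>r. r < k \<Longrightarrow> finite (S r)"
  shows "\<Sum>(U k S) = (\<Sum>r<k. k * \<Sum>(S r) + r * card (S r))"
proof -
  have "\<Sum>(U k S) = (\<Sum>x\<in>(SIGMA r:{..<k}. S r). (\<lambda>(r,q). q*k + r) x)"
    unfolding U_def by (rule sum.reindex[OF inj_phi[OF assms(1)], unfolded comp_def])
  also have "\<dots> = (\<Sum>r<k. \<Sum>q\<in>S r. q*k + r)"
    using assms by (subst sum.Sigma) auto
  also have "\<dots> = (\<Sum>r<k. k * \<Sum>(S r) + r * card (S r))"
    by (intro sum.cong) (auto simp: sum.distrib sum_distrib_left algebra_simps)
  finally show ?thesis .
qed


lemma U_finite: assumes "\<And>r. r < k \<Longrightarrow> finite (S r)" shows "finite (U k S)"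
  unfolding U_def using assms by (intro finite_imageI finite_SigmaI) auto

lemma cnt_U: assumes k: "k \<ge> 1" and fin: "\<And>r. r < k \<Longrightarrow> finite (S r)"
  shows "cnt k (U k S) = (\<Sum>r<k. cnt 1 (S r))"
proof -
  have eq: "{x\<in>U k S. k \<le> x \<and> x - k \<notin> U k S} = U k (\<lambda>r. {q\<in>S r. 1 \<le> q \<and> q - 1 \<notin> S r})"
  proof (rule set_eqI)
    fix x
    show "x \<in> {x\<in>U k S. k \<le> x \<and> x - k \<notin> U k S} \<longleftrightarrow> x \<in> U k (\<lambda>r. {q\<in>S r. 1 \<le> q \<and> q - 1 \<notin> S r})"
    proof (cases "k \<le> x")
      case True
      have d: "(x - k) div k = x div k - 1" "(x - k) mod k = x mod k"
        using True k by (simp_all add: le_div_geq le_mod_geq)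
      have "k div k \<le> x div k" by (rule div_le_mono[OF True])
      then have "1 \<le> x div k" using k by simp
      then show ?thesis using True by (simp add: U_mem[OF k] d)
    next
      case False
      then have "x div k = 0" by simp
      then show ?thesis using False by (simp add: U_mem[OF k])
    qed
  qed
  show ?thesis unfolding cnt_def eq using fin by (subst card_U[OF k]) auto
qed

lemma B_as_U: assumes k: "k \<ge> 1" and fin: "finite B"
  shows "B = U k (\<lambda>r. {q. q*k + r \<in> B})" "\<And>r. finite {q. q*k + r \<in> B}"
proof -
  show "B = U k (\<lambda>r. {q. q*k + r \<in> B})"
    by (rule set_eqI) (simp add: U_mem[OF k] mult.commute)
  fix r
  have "inj (\<lambda>q. q*k + r)" using k by (intro injI) simp
  then show "finite {q. q*k + r \<in> B}" using finite_vimageI[OF fin] by (simp add: vimage_def)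
qed

lemma tri_card_le_sum: "finite S \<Longrightarrow> tri (card S) \<le> \<Sum>S"
proof (induction S rule: finite_linorder_max_induct)
  case empty then show ?case by simp
next
  case (insert M S0)
  have "S0 \<subseteq> {..<M}" using insert by auto
  then have "card S0 \<le> M" using card_mono[of "{..<M}" S0] by simp
  moreover have "M \<notin> S0" using insert by auto
  ultimately show ?case using insert by simp
qed

lemma runner_bound: "finite S \<Longrightarrow> tri (card S) + tri (cnt 1 S + 1) \<le> \<Sum>S"
proof (induction S rule: finite_linorder_max_induct)
  case empty then show ?case by (simp add: cnt_def)
next
  case (insert M S0)
  have MS: "M \<notin> S0" using insert by auto
  define C0 where "C0 = {x\<in>S0. 1 \<le> x \<and> x - 1 \<notin> S0}"
  have fC0: "finite C0" using insert unfolding C0_def by auto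
  have cnt0: "cnt 1 S0 = card C0" unfolding cnt_def C0_def by simp
  have "S0 \<subseteq> {..<M}" using insert by auto
  then have cS0: "card S0 \<le> M" using card_mono[of "{..<M}" S0] by simp
  show ?case
  proof (cases "1 \<le> M \<and> M - 1 \<notin> S0")
    case True
    have seteq: "{x\<in>insert M S0. 1 \<le> x \<and> x - 1 \<notin> insert M S0} = insert M C0"
      using True insert(2) unfolding C0_def by force
    have "cnt 1 (insert M S0) = Suc (card C0)"
      unfolding cnt_def seteq using fC0 C0_def MS by (subst card_insert_disjoint) auto
    moreover have "card S0 + card C0 \<le> M - 1"
    proof -
      have inj: "inj_on (\<lambda>x. x - 1) C0" unfolding C0_def by (intro inj_onI) auto
      have disj: "S0 \<inter> (\<lambda>x. x - 1) ` C0 = {}" unfolding C0_def by auto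
      have sub: "S0 \<union> (\<lambda>x. x - 1) ` C0 \<subseteq> {..<M - 1}"
      proof
        fix y assume y: "y \<in> S0 \<union> (\<lambda>x. x - 1) ` C0"
        show "y \<in> {..<M - 1}"
        proof (cases "y \<in> S0")
          case True
          then have "y < M" "y \<noteq> M - 1" using insert(2) \<open>1 \<le> M \<and> M - 1 \<notin> S0\<close> by auto
          then show ?thesis by simp
        next
          case False
          then obtain x where "x \<in> C0" "y = x - 1" using y by auto
          then have "x < M" "1 \<le> x" using insert(2) unfolding C0_def by auto
          then show ?thesis using \<open>y = x - 1\<close> by simp
        qed
      qed
      have "card (S0 \<union> (\<lambda>x. x - 1) ` C0) = card S0 + card C0"
        using insert(1) fC0 disj card_image[OF inj] by (simp add: card_Un_disjoint del: One_nat_def)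
      then show ?thesis using card_mono[OF _ sub] by simp
    qed
    ultimately show ?thesis using insert cnt0 MS True by (simp, linarith)
  next
    case False
    have seteq: "{x\<in>insert M S0. 1 \<le> x \<and> x - 1 \<notin> insert M S0} = C0"
      using False insert(2) unfolding C0_def by force
    show ?thesis using insert cS0 cnt0 MS unfolding cnt_def seteq by simp
  qed
qed



lemma sum_lessThan_tri: "\<Sum>{..<m} = tri m" by (simp add: tri_def)

lemma upper_set:
  assumes k: "k \<ge> 1" and fin: "finite B"
  shows "F k (cnt k B) + tri (card B) \<le> \<Sum>B"
proof -
  define S where "S = (\<lambda>r. {q. q*k + r \<in> B})"
  have BU: "B = U k S" and finS: "\<And>r. finite (S r)" unfolding S_def using B_as_U[OF k fin] by auto
  define l where "l = (\<lambda>r. card (S r))"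
  define c where "c = (\<lambda>r. cnt 1 (S r))"
  have sumB: "\<Sum>B = (\<Sum>r<k. k * \<Sum>(S r) + r * l r)"
    unfolding l_def by (subst BU, rule sum_U[OF k finS])
  have cardB: "card B = (\<Sum>r<k. l r)" unfolding l_def by (subst BU, rule card_U[OF k finS])
  have cntB: "cnt k B = (\<Sum>r<k. c r)" unfolding c_def by (subst BU, rule cnt_U[OF k finS])
  have rb: "\<And>r. tri (l r) + tri (c r + 1) \<le> \<Sum>(S r)" unfolding l_def c_def by (rule runner_bound[OF finS])
  have "(\<Sum>r<k. k * (tri (l r) + tri (c r + 1)) + r * l r) \<le> (\<Sum>r<k. k * \<Sum>(S r) + r * l r)"
    by (intro sum_mono add_mono mult_le_mono2 rb order_refl)
  then have s1: "k * (\<Sum>r<k. tri (c r + 1)) + (\<Sum>r<k. k * tri (l r) + r * l r) \<le> \<Sum>B"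
    unfolding sumB by (simp add: sum.distrib sum_distrib_left algebra_simps)
  define Bs where "Bs = U k (\<lambda>r. {..<l r})"
  have "\<Sum>Bs = (\<Sum>r<k. k * tri (l r) + r * l r)"
    unfolding Bs_def by (subst sum_U[OF k]) (auto simp: sum_lessThan_tri)
  moreover have "card Bs = card B"
    unfolding Bs_def cardB by (subst card_U[OF k]) auto
  moreover have "finite Bs" unfolding Bs_def by (rule U_finite) auto
  ultimately have s2: "tri (card B) \<le> (\<Sum>r<k. k * tri (l r) + r * l r)"
    using tri_card_le_sum by metis
  have s3: "F k (cnt k B) \<le> k * (\<Sum>r<k. tri (c r + 1))"
    unfolding F_def cntB using convex_bound[OF k, of c] by simp
  show ?thesis using s1 s2 s3 by linarith
qed

definition R :: "nat \<Rightarrow> nat \<Rightarrow> nat \<Rightarrow> nat set" where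
  "R a c w = {..<a} \<union> (\<lambda>i. a + 1 + 2*i + (if Suc i = c then w else 0)) ` {..<c}"

lemma R_facts:
  fixes a c w :: nat
  defines "g \<equiv> (\<lambda>i. a + 1 + 2*i + (if Suc i = c then w else 0))"
  shows "finite (R a c w)" "card (R a c w) = a + c"
    "\<Sum>(R a c w) = tri (a + c) + tri (c + 1) + (if 0 < c then w else 0)"
    "c \<le> cnt 1 (R a c w)"
proof -
  have Rdef: "R a c w = {..<a} \<union> g ` {..<c}" unfolding R_def g_def by simp
  have mono: "g i < g i'" if "i < i'" "i' < c" for i i'
    using that unfolding g_def by auto
  have inj: "inj_on g {..<c}"
  proof (rule inj_onI)
    fix i i' assume "i \<in> {..<c}" "i' \<in> {..<c}" "g i = g i'"
    then show "i = i'" using mono[of i i'] mono[of i' i] by (cases "i < i'"; cases "i' < i") auto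
  qed
  have disj: "{..<a} \<inter> g ` {..<c} = {}" unfolding g_def by auto
  show "finite (R a c w)" unfolding Rdef by simp
  show card: "card (R a c w) = a + c" unfolding Rdef using disj
    by (simp add: card_Un_disjoint card_image[OF inj])
  have "\<Sum>(R a c w) = \<Sum>{..<a} + \<Sum>(g ` {..<c})" unfolding Rdef using disj
    by (simp add: sum.union_disjoint)
  also have "\<Sum>(g ` {..<c}) = (\<Sum>i<c. g i)" by (rule sum.reindex_cong[OF inj]) auto
  also have "(\<Sum>i<c. g i) = (\<Sum>i<c. a + 1 + 2*i) + (\<Sum>i<c. if Suc i = c then w else 0)"
    unfolding g_def sum.distrib[symmetric] by (rule sum.cong) auto
  also have "(\<Sum>i<c. if Suc i = c then w else 0) = (if 0 < c then w else 0)"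
  proof (cases c)
    case 0 then show ?thesis by simp
  next
    case (Suc c')
    have "(\<Sum>i<c. if Suc i = c then w else 0) = (\<Sum>i<c. if i = c' then w else 0)"
      using Suc by (intro sum.cong) auto
    also have "\<dots> = w" using Suc by (simp add: sum.delta')
    finally show ?thesis using Suc by simp
  qed
  also have "(\<Sum>i<c. a + 1 + 2*i) = c * (a + 1) + 2 * tri c"
    by (induction c) (simp_all add: algebra_simps)
  finally show "\<Sum>(R a c w) = tri (a + c) + tri (c + 1) + (if 0 < c then w else 0)"
    by (simp add: sum_lessThan_tri tri_add algebra_simps)
  have sub: "g ` {..<c} \<subseteq> {x \<in> R a c w. 1 \<le> x \<and> x - 1 \<notin> R a c w}"
  proof
    fix x assume "x \<in> g ` {..<c}"
    then obtain i where i: "i < c" "x = g i" by auto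
    have "x - 1 \<notin> g ` {..<c}"
    proof
      assume "x - 1 \<in> g ` {..<c}"
      then obtain i' where i': "i' < c" "g i' = g i - 1" using i by auto
      show False using i i' unfolding g_def by (auto split: if_splits) presburger+
    qed
    moreover have "x - 1 \<notin> {..<a}" using i unfolding g_def by auto
    ultimately show "x \<in> {x \<in> R a c w. 1 \<le> x \<and> x - 1 \<notin> R a c w}"
      using i unfolding Rdef g_def by auto
  qed
  have "card (g ` {..<c}) \<le> cnt 1 (R a c w)"
    unfolding cnt_def by (rule card_mono[OF _ sub]) (simp add: Rdef)
  then show "c \<le> cnt 1 (R a c w)" by (simp add: card_image[OF inj])
qed



lemma sum_if_less: "j \<le> k \<Longrightarrow> (\<Sum>r<k. if r < j then x else y) = j * x + (k - j) * (y::nat)"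
proof (induction k)
  case 0 then show ?case by simp
next
  case (Suc k)
  show ?case
  proof (cases "j \<le> k")
    case True
    have "Suc k - j = Suc (k - j)" using True by simp
    then show ?thesis using Suc True by simp
  next
    case False
    then have "j = Suc k" using Suc by simp
    then have "(\<Sum>r<Suc k. if r < j then x else y) = (\<Sum>r<Suc k. x)" by (intro sum.cong) auto
    then show ?thesis using \<open>j = Suc k\<close> by simp
  qed
qed

lemma tri_le1: "d \<le> 1 \<Longrightarrow> tri d = 0"
  by (cases d) auto

lemma lower_set:
  assumes k: "k \<ge> 1" and M: "M \<ge> 1" and Fn: "F k M \<le> n"
  shows "\<exists>B. finite B \<and> \<Sum>B = n + tri (card B) \<and> M \<le> cnt k B"
proof -
  define q where "q = M div k"
  define j where "j = M mod k"
  define e where "e = n - F k M"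
  define w where "w = e div k"
  define r0 where "r0 = e mod k"
  define D :: nat where "D = (if 0 < r0 then 1 else 0)"
  define dl where "dl = (\<lambda>r. if r = r0 then D else 0)"
  define l where "l = (\<lambda>r. q + 1 + dl r)"
  define c where "c = (\<lambda>r. q + (if r < j then 1 else 0))"
  define ww where "ww = (\<lambda>r::nat. if r = 0 then w else 0)"
  define S where "S = (\<lambda>r. R (l r - c r) (c r) (ww r))"
  have jk: "j < k" unfolding j_def using k by simp
  have r0k: "r0 < k" unfolding r0_def using k by simp
  have Mqj: "M = q * k + j" unfolding q_def j_def by simp
  have ekw: "e = k * w + r0" unfolding w_def r0_def by simp
  have n_eq: "n = F k M + k * w + r0" using ekw Fn unfolding e_def by simp
  have FM: "F k M = k * (k * tri (q+1) + j * (q+1))"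
    unfolding F_def Mqj using H_closed[OF k, of j q] jk by simp
  have cl: "c r \<le> l r" for r unfolding c_def l_def by simp
  have c0: "0 < c 0" using M Mqj unfolding c_def by (cases "0 < j") auto
  have finS: "finite (S r)" for r unfolding S_def by (rule R_facts)
  have cardS: "card (S r) = l r" for r unfolding S_def using R_facts(2) cl by simp
  have sumS: "\<Sum>(S r) = tri (l r) + tri (c r + 1) + ww r" for r
    unfolding S_def using R_facts(3)[of "l r - c r" "c r" "ww r"] cl c0 unfolding ww_def
    by (auto split: if_splits)
  have cntS: "c r \<le> cnt 1 (S r)" for r
    unfolding S_def using R_facts(4)[of "c r" "l r - c r" "ww r"] cl by simp
  define B where "B = U k S"
  have finB: "finite B" unfolding B_def by (rule U_finite) (rule finS)
  have x1: "(\<Sum>r<k. c r) = k * q + j"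
    unfolding c_def sum.distrib using sum_if_less[of j k 1 0] jk by simp
  have x2: "(\<Sum>r<k. c r) \<le> (\<Sum>r<k. cnt 1 (S r))" by (intro sum_mono cntS)
  have x3: "(\<Sum>r<k. cnt 1 (S r)) = cnt k B" unfolding B_def by (rule cnt_U[OF k finS, symmetric])
  have cntB: "M \<le> cnt k B" using x1 x2 x3 Mqj by (simp add: mult.commute)
  have sdl: "(\<Sum>r<k. dl r) = D" unfolding dl_def using r0k by (simp add: sum.delta)
  have srdl: "(\<Sum>r<k. r * dl r) = r0 * D" unfolding dl_def using r0k
    by (simp add: sum.delta if_distrib[of "\<lambda>x. _ * x"] cong: if_cong)
  have sww: "(\<Sum>r<k. ww r) = w" unfolding ww_def using k by (simp add: sum.delta)
  have Dr0: "r0 * D = r0" unfolding D_def by simp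
  have D1: "D \<le> 1" unfolding D_def by simp
  have dl1: "dl r \<le> 1" for r unfolding dl_def using D1 by simp
  have cardB: "card B = k * (q + 1) + D"
  proof -
    have "card B = (\<Sum>r<k. l r)" unfolding B_def using card_U[OF k finS] cardS by simp
    also have "\<dots> = (\<Sum>r<k. q + 1) + (\<Sum>r<k. dl r)" unfolding l_def sum.distrib by simp
    finally show ?thesis using sdl by simp
  qed
  have tril: "tri (l r) = tri (q+1) + (q+1) * dl r" for r
    unfolding l_def using tri_add[of "q+1" "dl r"] tri_le1[OF dl1] by simp
  have tric: "tri (c r + 1) = (if r < j then tri (q+1) + (q+1) else tri (q+1))" for r
    unfolding c_def by simp
  have s1: "(\<Sum>r<k. tri (c r + 1)) = k * tri (q+1) + j * (q+1)"
  proof -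
    have "(\<Sum>r<k. tri (c r + 1)) = j * (tri (q+1) + (q+1)) + (k - j) * tri (q+1)"
      unfolding tric using sum_if_less[of j k "tri (q+1) + (q+1)" "tri (q+1)"] jk by simp
    moreover obtain m where "k = j + m" using jk less_imp_le_nat le_Suc_ex by blast
    ultimately show ?thesis by (simp add: algebra_simps)
  qed
  have s2: "(\<Sum>r<k. k * tri (l r) + r * l r) = k * k * tri (q+1) + (q+1) * tri k + k * (q+1) * D + r0 * D"
  proof -
    have "(\<Sum>r<k. k * tri (l r) + r * l r) = (\<Sum>r<k. k * tri (q+1) + (k * (q+1)) * dl r + (q+1) * r + r * dl r)"
      by (intro sum.cong refl, simp only: tril) (simp add: l_def algebra_simps)
    also have "\<dots> = k * (k * tri (q+1)) + (k * (q+1)) * (\<Sum>r<k. dl r) + (q+1) * (\<Sum>r<k. r) + (\<Sum>r<k. r * dl r)"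
      by (simp only: sum.distrib sum_distrib_left) simp
    also have "(\<Sum>r<k. r) = tri k" by (simp add: tri_def)
    finally show ?thesis using sdl srdl by (simp add: algebra_simps)
  qed
  have "\<Sum>B = (\<Sum>r<k. k * \<Sum>(S r) + r * card (S r))" unfolding B_def by (rule sum_U[OF k finS])
  also have "\<dots> = (\<Sum>r<k. k * tri (c r + 1) + k * ww r + (k * tri (l r) + r * l r))"
    by (intro sum.cong) (simp_all add: sumS cardS algebra_simps)
  also have "\<dots> = k * (\<Sum>r<k. tri (c r + 1)) + k * (\<Sum>r<k. ww r) + (\<Sum>r<k. k * tri (l r) + r * l r)"
    by (simp only: sum.distrib sum_distrib_left)
  finally have sumB: "\<Sum>B = k * (k * tri (q+1) + j * (q+1)) + k * w + (k * k * tri (q+1) + (q+1) * tri k + k * (q+1) * D + r0 * D)"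
    using s1 s2 sww by simp
  have tB: "tri (card B) = k * k * tri (q+1) + (q+1) * tri k + k * (q+1) * D"
    unfolding cardB using tri_add[of "k*(q+1)" D] tri_le1[OF D1] tri_mult[of k "q+1"] by simp
  have "\<Sum>B = n + tri (card B)"
    unfolding sumB tB n_eq FM Dr0 by simp
  then show ?thesis using finB cntB by blast
qed



definition beta :: "nat list \<Rightarrow> nat \<Rightarrow> nat" where
  "beta lam i = lam!i + (length lam - 1 - i)"

definition col :: "nat list \<Rightarrow> nat \<Rightarrow> nat" where
  "col lam j = card {i. i < length lam \<and> j < lam!i}"

lemma down_closed:
  assumes "finite S" "\<And>i i'. i' \<in> S \<Longrightarrow> i \<le> i' \<Longrightarrow> i \<in> S"
  shows "S = {..<card S}"
proof (cases "S = {}")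
  case True then show ?thesis by simp
next
  case False
  have "S = {..Max S}"
  proof
    show "S \<subseteq> {..Max S}" using assms(1) by (auto intro: Max_ge)
    show "{..Max S} \<subseteq> S" using assms(2)[OF Max_in[OF assms(1) False]] by auto
  qed
  then show ?thesis by (metis card_atMost lessThan_Suc_atMost)
qed

lemma sorted_nth_ge:
  assumes "sorted_wrt (\<ge>) (lam :: nat list)" "i \<le> i'" "i' < length lam"
  shows "lam!i' \<le> lam!i"
proof (cases "i = i'")
  case True then show ?thesis by simp
next
  case False
  then show ?thesis using sorted_wrt_nth_less[OF assms(1)] assms(2,3) by simp
qed

context
  fixes lam :: "nat list"
  assumes srt: "sorted_wrt (\<ge>) lam"
begin

lemma col_set: "{i. i < length lam \<and> j < lam!i} = {..<col lam j}"
  unfolding col_def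
proof (rule down_closed)
  show "finite {i. i < length lam \<and> j < lam ! i}" by simp
  fix i i' assume "i' \<in> {i. i < length lam \<and> j < lam ! i}" "i \<le> i'"
  then show "i \<in> {i. i < length lam \<and> j < lam ! i}"
    using sorted_nth_ge[OF srt, of i i'] by auto
qed

lemma col_le: "col lam j \<le> length lam"
  unfolding col_def by (rule order_trans[OF card_mono[of "{..<length lam}"]]) auto

lemma col_mem: "i < length lam \<Longrightarrow> j < lam!i \<longleftrightarrow> i < col lam j"
  using col_set[of j] by (auto simp: set_eq_iff)

lemma col_anti: "j \<le> j' \<Longrightarrow> col lam j' \<le> col lam j"
  unfolding col_def by (rule card_mono) auto

lemma beta_dec: "i < i' \<Longrightarrow> i' < length lam \<Longrightarrow> beta lam i' < beta lam i"
  unfolding beta_def using sorted_nth_ge[OF srt, of i i'] by simp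

lemma beta_inj: "inj_on (beta lam) {..<length lam}"
proof (rule inj_onI)
  fix i i' assume "i \<in> {..<length lam}" "i' \<in> {..<length lam}" "beta lam i = beta lam i'"
  then show "i = i'" using beta_dec[of i i'] beta_dec[of i' i] by (cases "i < i'"; cases "i' < i") auto
qed

lemma yd_mem: "(i,j) \<in> young_diagram lam \<longleftrightarrow> i < length lam \<and> j < lam!i"
  unfolding young_diagram_def by simp

lemma hook_formula:
  assumes cell: "i < length lam" "j < lam!i"
  shows "hook_length lam (i,j) + (j + length lam - col lam j) = beta lam i"
proof -
  have ic: "i < col lam j" using col_mem cell by simp
  have hs: "{v \<in> young_diagram lam. v = (i,j) \<or> (snd v = j \<and> fst v > i) \<or> (fst v = i \<and> snd v > j)}
      = insert (i,j) ((\<lambda>i'. (i',j)) ` {i<..<col lam j} \<union> (\<lambda>j'. (i,j')) ` {j<..<lam!i})"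
  proof (rule set_eqI)
    fix v :: "nat \<times> nat"
    obtain a b where v: "v = (a,b)" by fastforce
    show "v \<in> {v \<in> young_diagram lam. v = (i,j) \<or> (snd v = j \<and> fst v > i) \<or> (fst v = i \<and> snd v > j)}
      \<longleftrightarrow> v \<in> insert (i,j) ((\<lambda>i'. (i',j)) ` {i<..<col lam j} \<union> (\<lambda>j'. (i,j')) ` {j<..<lam!i})"
      unfolding v using cell ic col_mem[of a j] col_le[of j] by (auto simp: yd_mem)
  qed
  have "hook_length lam (i,j) = Suc (card ((\<lambda>i'. (i',j)) ` {i<..<col lam j} \<union> (\<lambda>j'. (i,j')) ` {j<..<lam!i}))"
    unfolding hook_length_def fst_conv snd_conv hs by (subst card_insert_disjoint) auto
  also have "card ((\<lambda>i'. (i',j)) ` {i<..<col lam j} \<union> (\<lambda>j'. (i,j')) ` {j<..<lam!i})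
      = card ((\<lambda>i'. (i',j)) ` {i<..<col lam j}) + card ((\<lambda>j'. (i,j')) ` {j<..<lam!i})"
    by (rule card_Un_disjoint) auto
  also have "card ((\<lambda>i'. (i',j)) ` {i<..<col lam j}) = col lam j - Suc i"
    by (subst card_image) (auto simp: inj_on_def)
  also have "card ((\<lambda>j'. (i,j')) ` {j<..<lam!i}) = lam!i - Suc j"
    by (subst card_image) (auto simp: inj_on_def)
  finally show ?thesis unfolding beta_def using ic cell col_le[of j] by simp
qed

lemma m_notin: "j + length lam - col lam j \<notin> beta lam ` {..<length lam}"
proof
  assume "j + length lam - col lam j \<in> beta lam ` {..<length lam}"
  then obtain i' where i': "i' < length lam" "j + length lam - col lam j = beta lam i'" by auto
  have cl: "col lam j \<le> length lam" by (rule col_le)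
  show False
  proof (cases "i' < col lam j")
    case True
    then have "j < lam!i'" using col_mem i' by simp
    then show False using i' True cl unfolding beta_def by linarith
  next
    case False
    then have "\<not> j < lam!i'" using col_mem[of i' j] i'(1) by blast
    then have "lam!i' \<le> j" by simp
    then show False using i' False cl unfolding beta_def by linarith
  qed
qed

lemma m_mono: "j < j' \<Longrightarrow> j + length lam - col lam j < j' + length lam - col lam j'"
  using col_anti[of j j'] col_le[of j] col_le[of j'] by linarith

lemma hit:
  assumes xn: "x \<notin> beta lam ` {..<length lam}" and i: "i < length lam" and xi: "x < beta lam i"
  shows "\<exists>j. j < lam!i \<and> j + length lam - col lam j = x"
proof -
  let ?l = "length lam"
  define P where "P = {i'. i' < ?l \<and> x < beta lam i'}"
  define p where "p = card P"
  have Pp: "P = {..<p}" unfolding p_def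
  proof (rule down_closed)
    show "finite P" unfolding P_def by simp
    fix a b assume "b \<in> P" "a \<le> b"
    then show "a \<in> P" unfolding P_def using beta_dec[of a b] by (cases "a = b") auto
  qed
  have memP: "i' < ?l \<Longrightarrow> x < beta lam i' \<longleftrightarrow> i' < p" for i' using Pp unfolding P_def by (auto simp: set_eq_iff)
  have ip: "i < p" using memP[OF i] xi by simp
  have pl: "p \<le> ?l" unfolding p_def P_def by (rule order_trans[OF card_mono[of "{..<?l}"]]) auto
  have bp: "beta lam p < x" if "p < ?l"
  proof -
    have "\<not> x < beta lam p" using memP[OF that] by simp
    moreover have "beta lam p \<noteq> x" using xn that by auto
    ultimately show ?thesis by simp
  qed
  have lxp: "?l \<le> x + p"
  proof (cases "p < ?l")
    case True
    then show ?thesis using bp[OF True] unfolding beta_def by linarith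
  next
    case False then show ?thesis by simp
  qed
  define j where "j = x + p - ?l"
  have iff: "j < lam!i' \<longleftrightarrow> x < beta lam i'" if i': "i' < ?l" for i'
  proof
    assume "x < beta lam i'"
    then have "i' < p" using memP[OF i'] by simp
    then have "p - 1 < ?l" "p - 1 \<in> P" "lam!(p-1) \<le> lam!i'"
      using pl Pp sorted_nth_ge[OF srt, of i' "p-1"] by auto
    then have "x < lam!(p-1) + (?l - 1 - (p - 1))" "lam!(p-1) \<le> lam!i'" unfolding P_def beta_def by auto
    then show "j < lam!i'" unfolding j_def using \<open>i' < p\<close> lxp pl by arith
  next
    assume a: "j < lam!i'"
    show "x < beta lam i'"
    proof (rule ccontr)
      assume "\<not> x < beta lam i'"
      then have "p \<le> i'" using memP[OF i'] by simp
      then have pl': "p < ?l" using i' by simp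
      have "lam!i' \<le> lam!p" using sorted_nth_ge[OF srt \<open>p \<le> i'\<close> i'] .
      moreover have "lam!p + (?l - 1 - p) < x" using bp[OF pl'] unfolding beta_def .
      ultimately show False using a pl' unfolding j_def by linarith
    qed
  qed
  have "{i'. i' < ?l \<and> j < lam!i'} = P" unfolding P_def using iff by auto
  then have cj: "col lam j = p" unfolding col_def p_def by simp
  show ?thesis
  proof (intro exI conjI)
    show "j < lam!i" using iff[OF i] xi by simp
    show "j + ?l - col lam j = x" unfolding cj unfolding j_def using lxp by simp
  qed
qed

lemma num_hooks_eq:
  assumes k: "k \<ge> 1"
  shows "num_hooks k lam = cnt k (beta lam ` {..<length lam})"
proof -
  let ?l = "length lam"
  let ?B = "beta lam ` {..<length lam}"
  let ?Hs = "{u \<in> young_diagram lam. hook_length lam u = k}"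
  let ?f = "\<lambda>u. beta lam (fst u)"
  have inj: "inj_on ?f ?Hs"
  proof (rule inj_onI)
    fix u u' assume u: "u \<in> ?Hs" and u': "u' \<in> ?Hs" and eq: "?f u = ?f u'"
    obtain i j where uij: "u = (i,j)" by fastforce
    obtain i' j' where uij': "u' = (i',j')" by fastforce
    have c: "i < ?l" "j < lam!i" "i' < ?l" "j' < lam!i'" using u u' uij uij' by (auto simp: yd_mem)
    have ii: "i = i'" using eq beta_inj c unfolding uij uij' by (auto simp: inj_on_def)
    have h1: "k + (j + ?l - col lam j) = beta lam i" using hook_formula[OF c(1,2)] u uij by simp
    have h2: "k + (j' + ?l - col lam j') = beta lam i" using hook_formula[OF c(3,4)] u' uij' ii by simp
    have "j = j'" using h1 h2 m_mono[of j j'] m_mono[of j' j] by (cases "j < j'"; cases "j' < j") auto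
    then show "u = u'" using ii uij uij' by simp
  qed
  have img: "?f ` ?Hs = {x \<in> ?B. k \<le> x \<and> x - k \<notin> ?B}"
  proof (rule set_eqI, rule iffI)
    fix x assume "x \<in> ?f ` ?Hs"
    then obtain i j where c: "i < ?l" "j < lam!i" "hook_length lam (i,j) = k" "x = beta lam i"
      by (auto simp: yd_mem)
    have h: "k + (j + ?l - col lam j) = x" using hook_formula[OF c(1,2)] c by simp
    have "x - k = j + ?l - col lam j" using h by simp
    then show "x \<in> {x \<in> ?B. k \<le> x \<and> x - k \<notin> ?B}" using m_notin[of j] c h by auto
  next
    fix x assume "x \<in> {x \<in> ?B. k \<le> x \<and> x - k \<notin> ?B}"
    then obtain i where x: "i < ?l" "x = beta lam i" "k \<le> x" "x - k \<notin> ?B" by auto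
    obtain j where j: "j < lam!i" "j + ?l - col lam j = x - k"
      using hit[OF x(4) x(1)] x k by auto
    have "hook_length lam (i,j) = k" using hook_formula[OF x(1) j(1)] j x by simp
    then show "x \<in> ?f ` ?Hs" using x j by (auto simp: yd_mem intro!: image_eqI[of _ _ "(i,j)"])
  qed
  show ?thesis unfolding num_hooks_def cnt_def using card_image[OF inj] img by simp
qed

lemma size_eq: "sum_list lam + tri (length lam) = \<Sum>(beta lam ` {..<length lam})"
proof -
  let ?l = "length lam"
  have "\<Sum>(beta lam ` {..<?l}) = (\<Sum>i<?l. beta lam i)" by (rule sum.reindex_cong[OF beta_inj]) auto
  also have "\<dots> = (\<Sum>i<?l. lam!i) + (\<Sum>i<?l. ?l - 1 - i)" unfolding beta_def by (simp only: sum.distrib)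
  also have "(\<Sum>i<?l. ?l - 1 - i) = tri ?l"
  proof -
    have "(\<Sum>i<?l. ?l - 1 - i) = (\<Sum>i<?l. ?l - Suc i)" by simp
    also have "\<dots> = tri ?l" unfolding tri_def by (rule sum.nat_diff_reindex[where g = id, simplified])
    finally show ?thesis .
  qed
  also have "(\<Sum>i<?l. lam!i) = sum_list lam" by (simp add: sum_list_sum_nth atLeast0LessThan)
  finally show ?thesis by simp
qed

end



lemma strict_nth:
  assumes "sorted_wrt (>) (xs :: nat list)"
  shows "i + d < length xs \<Longrightarrow> xs!(i+d) + d \<le> xs!i"
proof (induction d)
  case 0 then show ?case by simp
next
  case (Suc d)
  have "xs!(i + Suc d) < xs!(i+d)" using sorted_wrt_nth_less[OF assms, of "i+d" "i + Suc d"] Suc.prems by simp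
  then show ?case using Suc by simp
qed

lemma strip_zeros: "sorted_wrt (\<ge>) (xs :: nat list) \<Longrightarrow> \<exists>z. xs = filter (\<lambda>x. 0 < x) xs @ replicate z 0"
proof (induction xs)
  case Nil then show ?case by simp
next
  case (Cons x xs)
  show ?case
  proof (cases "x = 0")
    case True
    then have "\<forall>y\<in>set xs. y = 0" using Cons.prems by auto
    then have e1: "filter (\<lambda>x. 0 < x) (x # xs) = []" and e2: "x # xs = replicate (Suc (length xs)) 0"
      using True by (auto simp: filter_empty_conv intro: replicate_eqI)
    show ?thesis by (rule exI[of _ "Suc (length xs)"], simp only: e1 append_Nil, rule e2)
  next
    case False
    obtain z where "xs = filter (\<lambda>x. 0 < x) xs @ replicate z 0" using Cons by auto
    then show ?thesis using False by (intro exI[of _ z]) simp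
  qed
qed

lemma yd_app0: "young_diagram (ys @ replicate z 0) = young_diagram ys"
  unfolding young_diagram_def by (auto simp: nth_append split: if_splits)

lemma num_hooks_app0: "num_hooks k (ys @ replicate z 0) = num_hooks k ys"
  unfolding num_hooks_def hook_length_def yd_app0 ..

lemma set_to_partition:
  assumes k: "k \<ge> 1" and fin: "finite B"
  shows "\<exists>lam. is_partition lam (\<Sum>B - tri (card B)) \<and> num_hooks k lam = cnt k B"
proof -
  define xs where "xs = rev (sorted_list_of_set B)"
  define l where "l = card B"
  have srt: "sorted_wrt (>) xs" unfolding xs_def sorted_wrt_rev
    using strict_sorted_list_of_set[of B] by simp
  have len: "length xs = l" unfolding xs_def l_def by simp
  have setxs: "set xs = B" unfolding xs_def using fin by simp
  have lower: "l - 1 - i \<le> xs!i" if "i < l" for i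
    using strict_nth[OF srt, of i "l - 1 - i"] that len by simp
  define lam0 where "lam0 = map (\<lambda>i. xs!i - (l - 1 - i)) [0..<l]"
  have len0: "length lam0 = l" unfolding lam0_def by simp
  have nth0: "lam0!i = xs!i - (l - 1 - i)" if "i < l" for i unfolding lam0_def using that by simp
  have srt0: "sorted_wrt (\<ge>) lam0"
    unfolding sorted_wrt_iff_nth_less
  proof (intro allI impI)
    fix i j assume ij: "i < j" "j < length lam0"
    have "xs!(i + (j - i)) + (j - i) \<le> xs!i" using strict_nth[OF srt, of i "j - i"] ij len len0 by simp
    then have "xs!j + (j - i) \<le> xs!i" using ij by simp
    then show "lam0!j \<le> lam0!i" using ij len0 nth0 lower[of j] by simp
  qed
  have beta0: "beta lam0 i = xs!i" if "i < l" for i unfolding beta_def len0 using nth0[OF that] lower[OF that] by simp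
  have B0: "beta lam0 ` {..<length lam0} = B"
  proof -
    have "beta lam0 ` {..<length lam0} = (\<lambda>i. xs!i) ` {..<length xs}" unfolding len0 len using beta0 by simp
    also have "\<dots> = set xs" by (auto simp: in_set_conv_nth)
    finally show ?thesis using setxs by simp
  qed
  have hk: "num_hooks k lam0 = cnt k B" using num_hooks_eq[OF srt0 k] B0 by simp
  have sz: "sum_list lam0 + tri l = \<Sum>B" using size_eq[OF srt0] B0 len0 by simp
  obtain z where z: "lam0 = filter (\<lambda>x. 0 < x) lam0 @ replicate z 0" using strip_zeros[OF srt0] by blast
  define lam where "lam = filter (\<lambda>x. 0 < x) lam0"
  have "num_hooks k lam = num_hooks k lam0" using num_hooks_app0[of k lam z] z unfolding lam_def by simp
  moreover have "sum_list lam = sum_list lam0" using arg_cong[OF z, of sum_list] unfolding lam_def by simp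
  moreover have "sorted_wrt (\<ge>) lam" unfolding lam_def by (rule sorted_wrt_filter[OF srt0])
  ultimately show ?thesis using hk sz unfolding is_partition_def l_def lam_def
    by (intro exI[of _ lam]) (auto simp: lam_def)
qed



definition G :: "nat \<Rightarrow> nat \<Rightarrow> nat" where "G k n = card {c. 1 \<le> c \<and> F k c \<le> n}"

lemma Gset_finite: "k \<ge> 1 \<Longrightarrow> finite {c. 1 \<le> c \<and> F k c \<le> n}"
proof (rule finite_subset[of _ "{..n}"])
  assume k: "k \<ge> 1"
  show "{c. 1 \<le> c \<and> F k c \<le> n} \<subseteq> {..n}"
  proof
    fix c assume "c \<in> {c. 1 \<le> c \<and> F k c \<le> n}"
    then show "c \<in> {..n}" using F_ge[OF k, of c] by auto
  qed
qed simp

lemma length_le_sum: "\<forall>x\<in>set xs. (0::nat) < x \<Longrightarrow> length xs \<le> sum_list xs"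
  by (induction xs) auto

lemma partitions_finite: "finite (partitions n)"
proof (rule finite_subset)
  show "partitions n \<subseteq> {xs. set xs \<subseteq> {..n} \<and> length xs \<le> n}"
    unfolding partitions_def is_partition_def using length_le_sum member_le_sum_list by fastforce
  show "finite {xs. set xs \<subseteq> {..n} \<and> length xs \<le> n}" by (rule finite_lists_length_le) simp
qed

lemma replicate_partition: "replicate n 1 \<in> partitions n"
proof -
  have "sorted_wrt (\<ge>) (replicate n (1::nat))" by (induction n) auto
  then show ?thesis unfolding partitions_def is_partition_def by (simp add: sum_list_replicate)
qed

lemma upper_part:
  assumes k: "k \<ge> 1" and lam: "lam \<in> partitions n"
  shows "num_hooks k lam \<le> G k n"
proof -
  have srt: "sorted_wrt (\<ge>) lam" and sl: "sum_list lam = n" using lam unfolding partitions_def is_partition_def by auto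
  define B where "B = beta lam ` {..<length lam}"
  have finB: "finite B" unfolding B_def by simp
  have cB: "card B = length lam" unfolding B_def by (simp add: card_image[OF beta_inj[OF srt]])
  have sz: "n + tri (card B) = \<Sum>B" unfolding B_def using size_eq[OF srt] sl cB B_def by simp
  define h where "h = num_hooks k lam"
  have hc: "h = cnt k B" unfolding h_def B_def by (rule num_hooks_eq[OF srt k])
  have "F k h \<le> n" using upper_set[OF k finB] sz hc by simp
  then have "{1..h} \<subseteq> {c. 1 \<le> c \<and> F k c \<le> n}"
  proof -
    assume Fh: "F k h \<le> n"
    show ?thesis
    proof
      fix c assume "c \<in> {1..h}"
      then show "c \<in> {c. 1 \<le> c \<and> F k c \<le> n}" using F_mono[of c h k] Fh by auto
    qed
  qed
  then have "card {1..h} \<le> G k n" unfolding G_def by (rule card_mono[OF Gset_finite[OF k]])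
  then show ?thesis unfolding h_def by simp
qed

lemma lower_part:
  assumes k: "k \<ge> 1"
  shows "\<exists>lam\<in>partitions n. G k n \<le> num_hooks k lam"
proof (cases "{c. 1 \<le> c \<and> F k c \<le> n} = {}")
  case True
  then show ?thesis unfolding G_def True using replicate_partition by auto
next
  case False
  define A where "A = {c. 1 \<le> c \<and> F k c \<le> n}"
  have finA: "finite A" unfolding A_def by (rule Gset_finite[OF k])
  define M where "M = Max A"
  have MA: "M \<in> A" unfolding M_def using Max_in[OF finA] False A_def by auto
  then have M1: "1 \<le> M" and FM: "F k M \<le> n" unfolding A_def by auto
  have "A \<subseteq> {1..M}" unfolding M_def using Max_ge[OF finA] A_def by auto
  then have GM: "G k n \<le> M" unfolding G_def A_def[symmetric] using card_mono[of "{1..M}" A] by simp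
  obtain B where B: "finite B" "\<Sum>B = n + tri (card B)" "M \<le> cnt k B" using lower_set[OF k M1 FM] by blast
  obtain lam where lam: "is_partition lam (\<Sum>B - tri (card B))" "num_hooks k lam = cnt k B"
    using set_to_partition[OF k B(1)] by blast
  have "lam \<in> partitions n" using lam(1) B(2) unfolding partitions_def by simp
  then show ?thesis using lam(2) B(3) GM by (intro bexI[of _ lam]) auto
qed

lemma b_eq_G: assumes k: "k \<ge> 1" shows "b n k = G k n"
proof -
  have fin: "finite (num_hooks k ` partitions n)" using partitions_finite by simp
  have ne: "num_hooks k ` partitions n \<noteq> {}" using replicate_partition by auto
  obtain lam where lam: "lam \<in> partitions n" "G k n \<le> num_hooks k lam" using lower_part[OF k] by blast
  have "Max (num_hooks k ` partitions n) \<le> G k n"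
    using fin ne upper_part[OF k] by (simp add: Max_le_iff)
  moreover have "num_hooks k lam \<le> Max (num_hooks k ` partitions n)" using fin lam(1) by (intro Max_ge) auto
  ultimately show ?thesis unfolding b_def using lam(2) by simp
qed



lemma term_eq:
  assumes k: "k \<ge> 1" and t: "t \<ge> 1"
  shows "(fps_X ^ ((t choose 2) * k^2) * (1 - fps_X ^ (t * k^2)) / (1 - fps_X ^ (t * k)) :: real fps)
       = (\<Sum>j<k. fps_X ^ ((t choose 2) * k^2 + t * k * j))"
proof -
  define a where "a = (t choose 2) * k^2"
  define y :: "real fps" where "y = fps_X ^ (t * k)"
  define D where "D = 1 - y"
  have tk: "t * k \<noteq> 0" using k t by simp
  have D0: "D $ 0 \<noteq> 0" unfolding D_def y_def using tk by simp
  define Q where "Q = (\<Sum>j<k. fps_X ^ (a + t * k * j) :: real fps)"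
  have Qy: "Q = fps_X ^ a * (\<Sum>j<k. y ^ j)"
    unfolding Q_def y_def by (simp add: sum_distrib_left power_add power_mult)
  have yk: "y ^ k = fps_X ^ (t * k^2)" unfolding y_def by (simp add: power_mult[symmetric] power2_eq_square mult.assoc)
  have "Q * D = fps_X ^ a * ((1 - y) * (\<Sum>j<k. y ^ j))" unfolding Qy D_def by (simp add: ac_simps)
  also have "\<dots> = fps_X ^ a * (1 - y ^ k)" by (simp only: one_diff_power_eq[symmetric])
  finally have QD: "Q * D = fps_X ^ a * (1 - fps_X ^ (t * k^2))" using yk by simp
  have "fps_X ^ a * (1 - fps_X ^ (t * k^2)) / D = Q * D * inverse D"
    using fps_divide_unit[OF D0] QD by simp
  also have "\<dots> = Q" using inverse_mult_eq_1'[OF D0] by (simp add: mult.assoc)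
  finally show ?thesis unfolding a_def D_def y_def Q_def .
qed

lemma F_pos:
  assumes k: "k \<ge> 1" and t: "t \<ge> 1" and j: "j < k"
  shows "F k ((t - 1) * k + j) = (t choose 2) * k^2 + t * k * j"
proof -
  have "H k ((t - 1) * k + j) = k * tri t + j * t" using H_closed[OF k, of j "t - 1"] j t by simp
  then show ?thesis unfolding F_def by (simp add: tri_choose power2_eq_square algebra_simps)
qed

lemma coeff_card:
  assumes k: "k \<ge> 1" and N: "n < N"
  shows "card {(t,j). t \<in> {1..N} \<and> j < k \<and> (t choose 2) * k^2 + t * k * j = n} = card {c. F k c = n}"
proof -
  let ?S = "{(t,j). t \<in> {1..N} \<and> j < k \<and> (t choose 2) * k^2 + t * k * j = n}"
  let ?h = "\<lambda>(t,j). (t - 1) * k + j"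
  have inj: "inj_on ?h ?S"
  proof (rule inj_onI)
    fix p p' assume p: "p \<in> ?S" and p': "p' \<in> ?S" and e: "?h p = ?h p'"
    obtain t j where tj: "p = (t,j)" by fastforce
    obtain t' j' where tj': "p' = (t',j')" by fastforce
    have a: "1 \<le> t" "j < k" "1 \<le> t'" "j' < k" "(t - 1) * k + j = (t' - 1) * k + j'"
      using p p' e tj tj' by auto
    then have "((t - 1) * k + j) div k = ((t' - 1) * k + j') div k" "((t - 1) * k + j) mod k = ((t' - 1) * k + j') mod k"
      by simp_all
    then have "t - 1 = t' - 1" "j = j'" using a by simp_all
    then show "p = p'" using a tj tj' by simp
  qed
  have img: "?h ` ?S = {c. F k c = n}"
  proof (rule set_eqI, rule iffI)
    fix c assume "c \<in> ?h ` ?S"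
    then obtain t j where "t \<in> {1..N}" "j < k" "(t choose 2) * k^2 + t * k * j = n" "c = (t - 1) * k + j" by auto
    then show "c \<in> {c. F k c = n}" using F_pos[OF k, of t j] by simp
  next
    fix c assume c: "c \<in> {c. F k c = n}"
    define t where "t = c div k + 1"
    define j where "j = c mod k"
    have cc: "c = (t - 1) * k + j" unfolding t_def j_def by simp
    have jk: "j < k" unfolding j_def using k by simp
    have "c \<le> n" using F_ge[OF k, of c] c by simp
    then have "t \<le> N" unfolding t_def using N div_le_dividend[of c k] by linarith
    moreover have "(t choose 2) * k^2 + t * k * j = n" using F_pos[OF k _ jk, of t] c cc unfolding t_def by simp
    ultimately show "c \<in> ?h ` ?S" using cc jk unfolding t_def by (auto intro!: image_eqI[of _ _ "(t,j)"] simp: t_def)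
  qed
  show ?thesis using card_image[OF inj] img by simp
qed

lemma partial_coeff:
  fixes f :: "nat \<Rightarrow> nat \<Rightarrow> nat" and N k :: nat
  shows "(\<Sum>t=1..N. \<Sum>j<k. fps_X ^ (f t j) :: real fps) $ n = real (card {(t,j). t \<in> {1..N} \<and> j < k \<and> f t j = n})"
proof -
  have "(\<Sum>t=1..N. \<Sum>j<k. fps_X ^ (f t j) :: real fps) $ n = (\<Sum>t=1..N. \<Sum>j<k. if n = f t j then 1 else 0)"
    by (simp add: fps_sum_nth)
  also have "\<dots> = (\<Sum>p\<in>{1..N} \<times> {..<k}. if f (fst p) (snd p) = n then 1 else 0)"
    by (subst sum.cartesian_product) (auto intro!: sum.cong)
  also have "\<dots> = real (card ({1..N} \<times> {..<k} \<inter> {p. f (fst p) (snd p) = n}))"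
    by (subst sum.If_cases) (auto intro: finite_cartesian_product)
  also have "{1..N} \<times> {..<k} \<inter> {p. f (fst p) (snd p) = n} = {(t,j). t \<in> {1..N} \<and> j < k \<and> f t j = n}"
    by auto
  finally show ?thesis .
qed



lemma G_0: assumes k: "k \<ge> 1" shows "G k 0 = 0"
proof -
  have "{c. 1 \<le> c \<and> F k c \<le> 0} = {}"
  proof -
    have "False" if "1 \<le> c" "F k c \<le> 0" for c using F_ge[OF k, of c] that by linarith
    then show ?thesis by auto
  qed
  note eq = this
  show ?thesis unfolding G_def eq by simp
qed

lemma Fset_0: assumes k: "k \<ge> 1" shows "{c. F k c = 0} = {0}"
  using F_ge[OF k] by auto (metis le_zero_eq)

lemma G_Suc: assumes k: "k \<ge> 1" shows "G k (Suc m) = G k m + card {c. F k c = Suc m}"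
proof -
  have eq: "{c. 1 \<le> c \<and> F k c \<le> Suc m} = {c. 1 \<le> c \<and> F k c \<le> m} \<union> {c. F k c = Suc m}"
  proof (rule set_eqI)
    fix c
    have "F k c = Suc m \<Longrightarrow> 1 \<le> c" by (cases c) auto
    then show "c \<in> {c. 1 \<le> c \<and> F k c \<le> Suc m} \<longleftrightarrow> c \<in> {c. 1 \<le> c \<and> F k c \<le> m} \<union> {c. F k c = Suc m}"
      by auto
  qed
  have fin2: "finite {c. F k c = Suc m}"
    by (rule finite_subset[OF _ Gset_finite[OF k, of "Suc m"]]) (auto, metis F_0 nat.distinct(1) not_less_eq_eq le_zero_eq gr0I Suc_leI)
  show ?thesis unfolding G_def eq
    by (rule card_Un_disjoint[OF Gset_finite[OF k] fin2]) auto
qed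

theorem theorem1p2:
  fixes k :: nat
  assumes "k \<ge> 1"
  shows "\<exists>T :: real fps.
     (\<lambda>N. \<Sum>t = 1..N. fps_X ^ ((t choose 2) * k^2) * (1 - fps_X ^ (t * k^2)) / (1 - fps_X ^ (t * k)))
        \<longlonglongrightarrow> T
     \<and> Abs_fps (\<lambda>n. real (b n k)) = (1 / (1 - fps_X)) * (T - 1)"
proof -
  have k: "k \<ge> 1" by fact
  define T :: "real fps" where "T = Abs_fps (\<lambda>n. real (card {c. F k c = n}))"
  have seq: "(\<lambda>N. \<Sum>t = 1..N. fps_X ^ ((t choose 2) * k^2) * (1 - fps_X ^ (t * k^2)) / (1 - fps_X ^ (t * k)) :: real fps)
      = (\<lambda>N. \<Sum>t = 1..N. \<Sum>j<k. fps_X ^ ((t choose 2) * k^2 + t * k * j))"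
    by (intro ext sum.cong refl) (simp add: term_eq[OF k])
  have lim: "(\<lambda>N. \<Sum>t = 1..N. \<Sum>j<k. fps_X ^ ((t choose 2) * k^2 + t * k * j)) \<longlonglongrightarrow> T"
  proof (rule tendsto_fpsI)
    fix n
    show "eventually (\<lambda>N. (\<Sum>t = 1..N. \<Sum>j<k. fps_X ^ ((t choose 2) * k^2 + t * k * j)) $ n = T $ n) sequentially"
    proof (rule eventually_sequentiallyI[of "Suc n"])
      fix N assume "Suc n \<le> N"
      then have "n < N" by simp
      then show "(\<Sum>t = 1..N. \<Sum>j<k. fps_X ^ ((t choose 2) * k^2 + t * k * j)) $ n = T $ n"
        unfolding T_def using partial_coeff[of "\<lambda>t j. (t choose 2) * k^2 + t * k * j" k N n] coeff_card[OF k] by simp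
    qed
  qed
  define A :: "real fps" where "A = Abs_fps (\<lambda>n. real (b n k))"
  have key: "(1 - fps_X) * A = T - 1"
  proof (rule fps_ext)
    fix n
    have "((1 - fps_X) * A) $ n = A $ n - (fps_X * A) $ n" by (simp add: algebra_simps)
    also have "\<dots> = (T - 1) $ n"
    proof (cases n)
      case 0
      then show ?thesis unfolding A_def T_def using b_eq_G[OF k] G_0[OF k] Fset_0[OF k] by simp
    next
      case (Suc m)
      then show ?thesis unfolding A_def T_def using b_eq_G[OF k] G_Suc[OF k, of m] by simp
    qed
    finally show "((1 - fps_X) * A) $ n = (T - 1) $ n" .
  qed
  have D0: "(1 - fps_X :: real fps) $ 0 \<noteq> 0" by simp
  have "(1 / (1 - fps_X)) * (T - 1) = inverse (1 - fps_X) * ((1 - fps_X) * A)"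
    using fps_divide_unit[OF D0, of 1] key by simp
  also have "\<dots> = A" using inverse_mult_eq_1[OF D0] by (simp add: mult.assoc[symmetric])
  finally have "A = (1 / (1 - fps_X)) * (T - 1)" by simp
  then show ?thesis using lim seq unfolding A_def by (intro exI[of _ T]) simp
qed


end
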